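(* For $s\in\mu_r$, $u,v\in\mathcal{A}_1$, $w\in\mathcal{A}_r$: \[ (u\diamond_1v)\diamond_s w=u\diamond_s(v\diamond_s w). \]
   Context: Fix $r\ge1$, $\mu_r$ the $r$th roots of unity, $\mathcal{A}_r=\mathbb{Q}\langle x,y_s\mid s\in\mu_r\rangle$ the free noncommutative polynomial algebra over $\mathbb{Q}$, $\mathcal{A}_1=\mathbb{Q}\langle x,y\rangle$ with $y=y_1$. Write $z=x+y_1$, $z_s=x+y_s$, $\delta(1)=0$, $\delta(s)=1$ ($s\ne1$), $z_s^\delta=x+\delta(s)y_s$, $z_{k,s}=x^{k-1}y_s$. Let $\varphi$ be the algebra automorphism of $\mathcal{A}_r$ with $\varphi(x)=z$, $\varphi(y_s)=\delta(s)y_s-y_1$. Every word is uniquely $z_{k_1,s_1}\cdots z_{k_l,s_l}x^a$ ($l,a\ge0$); define linear maps $\mathcal{I}(z_{k_1,s_1}\cdots z_{k_l,s_l}x^a)=z_{k_1,s_1}z_{k_2,s_1s_2}\cdots z_{k_l,s_1\cdots s_l}x^a$ and $M_s(z_{k_1,s_1}\cdots z_{k_l,s_l}x^a)=z_{k_1,ss_1}z_{k_2,s_2}\cdots z_{k_l,s_l}x^a$ (with $M_s(x^a)=x^a$), and $\psi_s=\varphi\circ\mathcal{I}\circ M_s$. Diamond product: for $s\in\mu_r$, $\diamond_s:\mathcal{A}_1\times\mathcal{A}_r\to\mathcal{A}_r$ is the $\mathbb{Q}$-bilinear map defined recursively on words by $1\diamond_s w=w$, $v\diamond_s1=\psi_s\varphi(v)$,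 and for $v\in\mathcal{A}_1$, $w\in\mathcal{A}_r$, $1\ne t\in\mu_r$: $vx\diamond_s wx=(v\diamond_s wx)x-(vy\diamond_s w)x$; $vy\diamond_s wx=(v\diamond_s wx)y+(vy\diamond_s w)x$; $vx\diamond_s wy=(v\diamond_s wy)x+(vx\diamond_s w)y$; $vy\diamond_s wy=(v\diamond_s wy)y-(vx\diamond_s w)y$; $vx\diamond_s wy_t=(v\diamond_s wy_t)x+(v\diamond_s wz_t)y_t-(vy\diamond_s w)y_t$; $vy\diamond_s wy_t=(v\diamond_s wy_t)y-(v\diamond_s wz_t)y_t+(vy\diamond_s w)y_t$. (For $s=1$ and $v,w\in\mathcal{A}_1$, $v\diamond_1w\in\mathcal{A}_1$.) *)

theory Defs
  imports Complex_Main "HOL-Library.Poly_Mapping"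
begin

(* Letters: x, and y_s indexed by a complex number s (intended: s an r-th root of unity). *)
datatype letter = X | Y complex

type_synonym word = "letter list"
type_synonym ncpoly = "word \<Rightarrow>\<^sub>0 rat"

definition mu :: "nat \<Rightarrow> complex set" where
  "mu r = {s. s ^ r = 1}"

definition wd :: "word \<Rightarrow> ncpoly" where
  "wd w = Poly_Mapping.single w 1"

definition Alg :: "nat \<Rightarrow> ncpoly set" where
  "Alg r = {p. \<forall>w \<in> Poly_Mapping.keys p. \<forall>t. Y t \<in> set w \<longrightarrow> t \<in> mu r}"

definition scale :: "rat \<Rightarrow> ncpoly \<Rightarrow> ncpoly" where
  "scale c p = Poly_Mapping.map (\<lambda>a. c * a) p"

definition lin :: "(word \<Rightarrow> ncpoly) \<Rightarrow> ncpoly \<Rightarrow> ncpoly" where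
  "lin f p = (\<Sum>w\<in>Poly_Mapping.keys p. scale (Poly_Mapping.lookup p w) (f w))"

definition bilin :: "(word \<Rightarrow> word \<Rightarrow> ncpoly) \<Rightarrow> ncpoly \<Rightarrow> ncpoly \<Rightarrow> ncpoly" where
  "bilin f p q = (\<Sum>a\<in>Poly_Mapping.keys p. \<Sum>b\<in>Poly_Mapping.keys q. scale (Poly_Mapping.lookup p a * Poly_Mapping.lookup q b) (f a b))"

definition ncmult :: "ncpoly \<Rightarrow> ncpoly \<Rightarrow> ncpoly" where
  "ncmult = bilin (\<lambda>a b. wd (a @ b))"

definition rapp :: "letter \<Rightarrow> ncpoly \<Rightarrow> ncpoly" where
  "rapp c p = lin (\<lambda>w. wd (w @ [c])) p"

fun phi_letter :: "letter \<Rightarrow> ncpoly" where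
  "phi_letter X = wd [X] + wd [Y 1]"
| "phi_letter (Y t) = (if t = 1 then 0 else wd [Y t]) - wd [Y 1]"

definition phi_word :: "word \<Rightarrow> ncpoly" where
  "phi_word w = foldr ncmult (map phi_letter w) (wd [])"

definition phi :: "ncpoly \<Rightarrow> ncpoly" where
  "phi = lin phi_word"

fun Iw :: "complex \<Rightarrow> word \<Rightarrow> word" where
  "Iw acc [] = []"
| "Iw acc (X # w) = X # Iw acc w"
| "Iw acc (Y t # w) = Y (acc * t) # Iw (acc * t) w"

fun Mw :: "complex \<Rightarrow> word \<Rightarrow> word" where
  "Mw s [] = []"
| "Mw s (X # w) = X # Mw s w"
| "Mw s (Y t # w) = Y (s * t) # w"

definition psi :: "complex \<Rightarrow> ncpoly \<Rightarrow> ncpoly" where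
  "psi s p = phi (lin (\<lambda>w. wd (Iw 1 (Mw s w))) p)"

(* diamond product on words, with both words given REVERSED (last letter first).
   Letters y_u with u <> 1 in the left argument (outside A_1) are mapped to 0 (irrelevant). *)
function dwr :: "complex \<Rightarrow> word \<Rightarrow> word \<Rightarrow> ncpoly" where
  "dwr s [] w = wd (rev w)"
| "dwr s (a # v) [] = psi s (phi (wd (rev (a # v))))"
| "dwr s (X # v) (X # w) = rapp X (dwr s v (X # w)) - rapp X (dwr s (Y 1 # v) w)"
| "dwr s (X # v) (Y t # w) =
     (if t = 1 then rapp X (dwr s v (Y 1 # w)) + rapp (Y 1) (dwr s (X # v) w)
      else rapp X (dwr s v (Y t # w)) + rapp (Y t) (dwr s v (X # w) + dwr s v (Y t # w))
           - rapp (Y t) (dwr s (Y 1 # v) w))"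
| "dwr s (Y u # v) (X # w) =
     (if u = 1 then rapp (Y 1) (dwr s v (X # w)) + rapp X (dwr s (Y 1 # v) w) else 0)"
| "dwr s (Y u # v) (Y t # w) =
     (if u = 1 then
        (if t = 1 then rapp (Y 1) (dwr s v (Y 1 # w)) - rapp (Y 1) (dwr s (X # v) w)
         else rapp (Y 1) (dwr s v (Y t # w)) - rapp (Y t) (dwr s v (X # w) + dwr s v (Y t # w))
              + rapp (Y t) (dwr s (Y 1 # v) w))
      else 0)"
  by pat_completeness auto
termination
  by (relation "measure (\<lambda>(s, v, w). length v + length w)") auto

definition dw :: "complex \<Rightarrow> word \<Rightarrow> word \<Rightarrow> ncpoly" where
  "dw s v w = dwr s (rev v) (rev w)"

definition diamond :: "complex \<Rightarrow> ncpoly \<Rightarrow> ncpoly \<Rightarrow> ncpoly" where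
  "diamond s = bilin (dw s)"

end

theory Submission
  imports Defs
begin

lemma lookup_scale[simp]: "Poly_Mapping.lookup (scale c p) w = c * Poly_Mapping.lookup p w"
  by (simp add: scale_def Poly_Mapping.map.rep_eq when_def)

lemma scale_eqI: "(\<And>w. Poly_Mapping.lookup p w = Poly_Mapping.lookup q w) \<Longrightarrow> p = q"
  by (rule poly_mapping_eqI)

lemma scale_0[simp]: "scale 0 p = 0" by (rule poly_mapping_eqI) simp
lemma scale_zero[simp]: "scale c 0 = 0" by (rule poly_mapping_eqI) simp
lemma scale_1[simp]: "scale 1 p = p" by (rule poly_mapping_eqI) simp
lemma scale_add_left: "scale (a+b) p = scale a p + scale b p"
  by (rule poly_mapping_eqI) (simp add: lookup_add algebra_simps)
lemma scale_add_right: "scale c (p+q) = scale c p + scale c q"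
  by (rule poly_mapping_eqI) (simp add: lookup_add algebra_simps)
lemma scale_minus_right: "scale c (-p) = - scale c p"
  by (rule poly_mapping_eqI) simp
lemma scale_diff_right: "scale c (p-q) = scale c p - scale c q"
  by (rule poly_mapping_eqI) (simp add: lookup_minus algebra_simps)
lemma scale_scale: "scale a (scale b p) = scale (a*b) p"
  by (rule poly_mapping_eqI) simp
lemma scale_sum: "scale c (sum f S) = (\<Sum>i\<in>S. scale c (f i))"
  by (induction S rule: infinite_finite_induct) (simp_all add: scale_add_right)
lemma keys_scale: "Poly_Mapping.keys (scale c p) \<subseteq> Poly_Mapping.keys p"
  by (auto simp: in_keys_iff)

lemma lin_superset:
  assumes "finite S" "Poly_Mapping.keys p \<subseteq> S"
  shows "lin f p = (\<Sum>w\<in>S. scale (Poly_Mapping.lookup p w) (f w))"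
  unfolding lin_def
  by (rule sum.mono_neutral_left) (use assms in \<open>auto simp: in_keys_iff\<close>)

lemma lin_add: "lin f (p+q) = lin f p + lin f q"
proof -
  let ?S = "Poly_Mapping.keys p \<union> Poly_Mapping.keys q"
  have "lin f (p+q) = (\<Sum>w\<in>?S. scale (Poly_Mapping.lookup (p+q) w) (f w))"
    by (rule lin_superset) (auto dest: set_mp[OF keys_add])
  also have "\<dots> = (\<Sum>w\<in>?S. scale (Poly_Mapping.lookup p w) (f w)) + (\<Sum>w\<in>?S. scale (Poly_Mapping.lookup q w) (f w))"
    by (simp add: lookup_add scale_add_left sum.distrib)
  also have "\<dots> = lin f p + lin f q"
    by (subst (1 2) lin_superset[of ?S]) auto
  finally show ?thesis .
qed

lemma lin_zero[simp]: "lin f 0 = 0" by (simp add: lin_def)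

lemma lin_uminus: "lin f (-p) = - lin f p"
  using lin_add[of f "-p" p] by (simp add: eq_neg_iff_add_eq_0)

lemma lin_diff: "lin f (p-q) = lin f p - lin f q"
  using lin_add[of f p "-q"] by (simp add: lin_uminus)

lemma lin_wd[simp]: "lin f (wd w) = f w"
  by (simp add: lin_def wd_def)

lemma lin_scale: "lin f (scale c p) = scale c (lin f p)"
proof -
  have "lin f (scale c p) = (\<Sum>w\<in>Poly_Mapping.keys p. scale (Poly_Mapping.lookup (scale c p) w) (f w))"
    by (rule lin_superset) (auto dest: set_mp[OF keys_scale])
  thus ?thesis by (simp add: lin_def scale_sum scale_scale)
qed

lemma lin_fun_add: "lin (\<lambda>w. f w + g w) p = lin f p + lin g p"
  by (simp add: lin_def scale_add_right sum.distrib)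
lemma lin_fun_uminus: "lin (\<lambda>w. - f w) p = - lin f p"
  by (simp add: lin_def scale_minus_right sum_negf)
lemma lin_fun_diff: "lin (\<lambda>w. f w - g w) p = lin f p - lin g p"
  by (simp add: lin_def scale_diff_right sum_subtractf)
lemma lin_fun_zero[simp]: "lin (\<lambda>w. 0) p = 0"
  by (simp add: lin_def)
lemma lin_fun_scale: "lin (\<lambda>w. scale c (f w)) p = scale c (lin f p)"
  by (simp add: lin_def scale_sum scale_scale mult.commute)

lemma lin_cong: "(\<And>w. w \<in> Poly_Mapping.keys p \<Longrightarrow> f w = g w) \<Longrightarrow> lin f p = lin g p"
  by (simp add: lin_def)

lemma lin_sum: "lin f (sum g S) = (\<Sum>i\<in>S. lin f (g i))"
  by (induction S rule: infinite_finite_induct) (simp_all add: lin_add)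

lemma lin_comp: "lin f (lin g p) = lin (\<lambda>w. lin f (g w)) p"
proof -
  have "lin f (lin g p) = (\<Sum>w\<in>Poly_Mapping.keys p. lin f (scale (Poly_Mapping.lookup p w) (g w)))"
    by (simp only: lin_def[of g p] lin_sum)
  then show ?thesis by (simp add: lin_scale lin_def[of _ p])
qed

lemma lin_swap: "lin (\<lambda>a. lin (\<lambda>b. G a b) q) p = lin (\<lambda>b. lin (\<lambda>a. G a b) p) q"
  unfolding lin_def scale_sum scale_scale
  by (subst sum.swap) (simp add: mult.commute)

lemma lin_id: "lin wd p = p"
proof (rule poly_mapping_eqI)
  fix k
  show "Poly_Mapping.lookup (lin wd p) k = Poly_Mapping.lookup p k"
    unfolding lin_def lookup_sum
    by (cases "k \<in> Poly_Mapping.keys p")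
       (simp_all add: wd_def lookup_single when_def in_keys_iff if_distrib[of "\<lambda>x. _ * x"] sum.delta' cong: if_cong)
qed

lemma bilin_lin: "bilin F p q = lin (\<lambda>a. lin (\<lambda>b. F a b) q) p"
  by (simp add: bilin_def lin_def scale_sum scale_scale)

lemma keys_lin: "Poly_Mapping.keys (lin f p) \<subseteq> (\<Union>w\<in>Poly_Mapping.keys p. Poly_Mapping.keys (f w))"
  unfolding lin_def using keys_sum keys_scale by fastforce

lemma rapp_wd: "rapp c (wd w) = wd (w @ [c])" by (simp add: rapp_def)
lemma wd_snoc: "wd (w @ [c]) = rapp c (wd w)" by (simp add: rapp_wd)
lemma rapp_add[simp]: "rapp c (p + q) = rapp c p + rapp c q" by (simp add: rapp_def lin_add)
lemma rapp_diff[simp]: "rapp c (p - q) = rapp c p - rapp c q" by (simp add: rapp_def lin_diff)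
lemma rapp_uminus[simp]: "rapp c (- p) = - rapp c p" by (simp add: rapp_def lin_uminus)
lemma rapp_zero[simp]: "rapp c 0 = 0" by (simp add: rapp_def)
lemma rapp_lin: "rapp c (lin f p) = lin (\<lambda>w. rapp c (f w)) p"
  by (simp add: rapp_def lin_comp)
lemma lin_rapp: "lin f (rapp c p) = lin (\<lambda>w. f (w @ [c])) p"
  by (simp add: rapp_def lin_comp)

lemma bilin_rapp1: "bilin F (rapp c p) q = bilin (\<lambda>a b. F (a @ [c]) b) p q"
  by (simp add: bilin_lin lin_rapp)
lemma bilin_rapp2: "bilin F p (rapp c q) = bilin (\<lambda>a b. F a (b @ [c])) p q"
  by (simp add: bilin_lin lin_rapp)
lemma bilin_fun_add: "bilin (\<lambda>a b. F a b + G a b) p q = bilin F p q + bilin G p q"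
  by (simp add: bilin_lin lin_fun_add)
lemma bilin_fun_rapp: "bilin (\<lambda>a b. rapp c (F a b)) p q = rapp c (bilin F p q)"
  by (simp add: bilin_lin rapp_lin)
lemma bilin_cong: "(\<And>a b. F a b = G a b) \<Longrightarrow> bilin F p q = bilin G p q"
  by (simp add: bilin_def)
lemma bilin_add1: "bilin F (p + p') q = bilin F p q + bilin F p' q"
  by (simp add: bilin_lin lin_add)
lemma bilin_add2: "bilin F p (q + q') = bilin F p q + bilin F p q'"
  by (simp add: bilin_lin lin_add lin_fun_add)
lemma bilin_uminus1: "bilin F (- p) q = - bilin F p q"
  by (simp add: bilin_lin lin_uminus)
lemma bilin_uminus2: "bilin F p (- q) = - bilin F p q"
  by (simp add: bilin_lin lin_uminus lin_fun_uminus)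
lemma bilin_diff1: "bilin F (p - p') q = bilin F p q - bilin F p' q"
  by (simp add: bilin_lin lin_diff)
lemma bilin_diff2: "bilin F p (q - q') = bilin F p q - bilin F p q'"
  by (simp add: bilin_lin lin_diff lin_fun_diff)
lemma bilin_zero1[simp]: "bilin F 0 q = 0" by (simp add: bilin_lin)
lemma bilin_zero2[simp]: "bilin F p 0 = 0" by (simp add: bilin_lin)
lemma bilin_wd[simp]: "bilin F (wd a) (wd b) = F a b" by (simp add: bilin_lin)
lemma bilin_lin1: "bilin F (lin f p) q = lin (\<lambda>a. bilin F (f a) q) p"
  by (simp add: bilin_lin lin_comp)
lemma bilin_lin2: "bilin F p (lin g q) = lin (\<lambda>b. bilin F p (g b)) q"
  by (simp add: bilin_lin lin_comp) (rule lin_swap)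

lemma ncmult_assoc: "ncmult (ncmult A B) C = ncmult A (ncmult B C)"
  by (simp add: ncmult_def bilin_lin lin_comp)
lemma ncmult_wd_right: "ncmult A (wd [c]) = rapp c A"
  by (simp add: ncmult_def bilin_lin rapp_def rapp_wd)
lemma ncmult_one_left: "ncmult (wd []) A = A"
  by (simp add: ncmult_def bilin_lin lin_id)
lemma ncmult_one_right: "ncmult A (wd []) = A"
  by (simp add: ncmult_def bilin_lin lin_id)
lemma ncmult_add2: "ncmult A (B + C) = ncmult A B + ncmult A C"
  by (simp add: ncmult_def bilin_add2)
lemma ncmult_diff2: "ncmult A (B - C) = ncmult A B - ncmult A C"
  by (simp add: ncmult_def bilin_diff2)
lemma ncmult_zero2: "ncmult A 0 = 0"
  by (simp add: ncmult_def)

lemma foldr_ncmult: "foldr ncmult Ps (ncmult P0 Z) = ncmult (foldr ncmult Ps P0) Z"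
  by (induction Ps) (simp_all add: ncmult_assoc)

lemma phi_word_snoc: "phi_word (w @ [c]) = ncmult (phi_word w) (phi_letter c)"
proof -
  have "phi_word (w @ [c]) = foldr ncmult (map phi_letter w) (ncmult (wd []) (phi_letter c))"
    by (simp add: phi_word_def ncmult_one_left ncmult_one_right)
  also have "\<dots> = ncmult (phi_word w) (phi_letter c)"
    by (simp add: foldr_ncmult phi_word_def)
  finally show ?thesis .
qed

lemma phi_wd: "phi (wd w) = phi_word w" by (simp add: phi_def)
lemma phi_add[simp]: "phi (p + q) = phi p + phi q" by (simp add: phi_def lin_add)
lemma phi_diff[simp]: "phi (p - q) = phi p - phi q" by (simp add: phi_def lin_diff)
lemma phi_uminus[simp]: "phi (- p) = - phi p" by (simp add: phi_def lin_uminus)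
lemma phi_zero[simp]: "phi 0 = 0" by (simp add: phi_def)
lemma phi_nil[simp]: "phi (wd []) = wd []" by (simp add: phi_def phi_word_def)

lemma ncmult_lin1: "ncmult (lin f p) L = lin (\<lambda>w. ncmult (f w) L) p"
  by (simp add: ncmult_def bilin_lin1)

lemma phi_rapp_gen: "phi (rapp c p) = ncmult (phi p) (phi_letter c)"
  by (simp add: phi_def lin_rapp phi_word_snoc ncmult_lin1)

lemma phi_rapp_X[simp]: "phi (rapp X p) = rapp X (phi p) + rapp (Y 1) (phi p)"
  by (simp add: phi_rapp_gen ncmult_add2 ncmult_wd_right)
lemma phi_rapp_Y[simp]: "phi (rapp (Y t) p) = (if t = 1 then 0 else rapp (Y t) (phi p)) - rapp (Y 1) (phi p)"
  by (simp add: phi_rapp_gen ncmult_diff2 ncmult_wd_right ncmult_zero2)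

lemma phi_phi_wd: "phi (phi (wd w)) = wd w"
proof (induction w rule: rev_induct)
  case Nil then show ?case by simp
next
  case (snoc c w)
  show ?case
  proof (cases c)
    case X then show ?thesis using snoc by (simp add: wd_snoc)
  next
    case (Y t) then show ?thesis using snoc by (simp add: wd_snoc)
  qed
qed

lemma phi_lin: "phi (lin f p) = lin (\<lambda>w. phi (f w)) p"
  by (simp add: phi_def lin_comp)

lemma phi_phi[simp]: "phi (phi p) = p"
proof -
  have e: "phi p = lin (\<lambda>w. phi (wd w)) p" by (simp add: phi_def)
  have "phi (phi p) = lin (\<lambda>w. phi (phi (wd w))) p"
    by (subst e) (rule phi_lin)
  also have "\<dots> = p" by (simp add: phi_phi_wd lin_id)
  finally show ?thesis .
qed

(* twisted stuffle, on reversed words *)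
fun ysub :: "complex \<Rightarrow> letter \<Rightarrow> letter" where
  "ysub s X = X"
| "ysub s (Y t) = Y s"

fun tw :: "complex \<Rightarrow> word \<Rightarrow> word \<Rightarrow> ncpoly" where
  "tw s [] b = wd (rev b)"
| "tw s (a # as) [] = wd (rev (map (ysub s) (a # as)))"
| "tw s (X # as) (b # bs) = rapp X (tw s as (b # bs))"
| "tw s (Y u # as) (X # bs) = rapp X (tw s (Y u # as) bs)"
| "tw s (Y u # as) (Y t # bs) = rapp (Y t) (tw s as (Y t # bs)) + rapp (Y t) (tw s (Y u # as) bs)
      + rapp (Y t) (rapp X (tw s as bs))"

lemma tw_nil2: "tw s a [] = wd (rev (map (ysub s) a))"
  by (cases a) simp_all

lemma tw_X1: "tw s (X # a) b = rapp X (tw s a b)"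
  by (cases b) (simp_all add: tw_nil2 wd_snoc)

lemma tw_X2: "tw s a (X # b) = rapp X (tw s a b)"
proof (induction a)
  case Nil then show ?case by (simp add: wd_snoc)
next
  case (Cons l a)
  then show ?case by (cases l) (simp_all add: tw_X1)
qed

definition TWp :: "complex \<Rightarrow> ncpoly \<Rightarrow> ncpoly \<Rightarrow> ncpoly" where
  "TWp s = bilin (\<lambda>a b. tw s (rev a) (rev b))"

definition ysubp :: "complex \<Rightarrow> ncpoly \<Rightarrow> ncpoly" where
  "ysubp s = lin (\<lambda>w. wd (map (ysub s) w))"

lemma TWp_wd: "TWp s (wd a) (wd b) = tw s (rev a) (rev b)"
  by (simp add: TWp_def)

lemma TWp_add1[simp]: "TWp s (p + p') q = TWp s p q + TWp s p' q" by (simp add: TWp_def bilin_add1)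
lemma TWp_add2[simp]: "TWp s p (q + q') = TWp s p q + TWp s p q'" by (simp add: TWp_def bilin_add2)
lemma TWp_diff1[simp]: "TWp s (p - p') q = TWp s p q - TWp s p' q" by (simp add: TWp_def bilin_diff1)
lemma TWp_diff2[simp]: "TWp s p (q - q') = TWp s p q - TWp s p q'" by (simp add: TWp_def bilin_diff2)
lemma TWp_uminus1[simp]: "TWp s (- p) q = - TWp s p q" by (simp add: TWp_def bilin_uminus1)
lemma TWp_uminus2[simp]: "TWp s p (- q) = - TWp s p q" by (simp add: TWp_def bilin_uminus2)
lemma TWp_zero1[simp]: "TWp s 0 q = 0" by (simp add: TWp_def)
lemma TWp_zero2[simp]: "TWp s p 0 = 0" by (simp add: TWp_def)

lemma TWp_X1[simp]: "TWp s (rapp X p) q = rapp X (TWp s p q)"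
  by (simp add: TWp_def bilin_rapp1 tw_X1 bilin_fun_rapp)
lemma TWp_X2[simp]: "TWp s p (rapp X q) = rapp X (TWp s p q)"
  by (simp add: TWp_def bilin_rapp2 tw_X2 bilin_fun_rapp)
lemma TWp_YY[simp]: "TWp s (rapp (Y u) p) (rapp (Y t) q) =
   rapp (Y t) (TWp s p (rapp (Y t) q)) + rapp (Y t) (TWp s (rapp (Y u) p) q) + rapp (Y t) (rapp X (TWp s p q))"
  by (simp add: TWp_def bilin_rapp1 bilin_rapp2 bilin_fun_add bilin_fun_rapp)

lemma TWp_one1[simp]: "TWp s (wd []) q = q"
  by (simp add: TWp_def bilin_lin lin_id)
lemma TWp_one2: "TWp s p (wd []) = ysubp s p"
  by (simp add: TWp_def bilin_lin ysubp_def tw_nil2 rev_map)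

lemma TWp_lin1: "TWp s (lin f p) q = lin (\<lambda>a. TWp s (f a) q) p"
  by (simp add: TWp_def bilin_lin1)
lemma TWp_lin2: "TWp s p (lin g q) = lin (\<lambda>b. TWp s p (g b)) q"
  by (simp add: TWp_def bilin_lin2)

lemma ysub_ysub[simp]: "ysub s (ysub t l) = ysub s l" by (cases l) simp_all
lemma ysub_comp[simp]: "ysub s \<circ> ysub t = ysub s" by (rule ext) simp
lemma map_ysub_ysub[simp]: "map (ysub s) (map (ysub t) w) = map (ysub s) w" by (induction w) simp_all

lemma tw_ysub1: "tw s (map (ysub t) a) b = tw s a b"
  by (induction s a b rule: tw.induct) (simp_all add: tw_nil2)

lemma ysubp_rapp: "ysubp s (rapp c p) = rapp (ysub s c) (ysubp s p)"
  by (simp add: ysubp_def lin_rapp rapp_lin rapp_wd)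
lemma ysubp_add[simp]: "ysubp s (p + q) = ysubp s p + ysubp s q" by (simp add: ysubp_def lin_add)
lemma ysubp_wd: "ysubp s (wd w) = wd (map (ysub s) w)" by (simp add: ysubp_def)

lemma tw_ysub2: "ysubp s (tw t a b) = tw s a (map (ysub s) b)"
  by (induction t a b rule: tw.induct) (simp_all add: ysubp_rapp ysubp_wd rev_map tw_nil2)

lemma TWp_wd1: "TWp s (wd a) q = lin (\<lambda>b. tw s (rev a) (rev b)) q"
  by (simp add: TWp_def bilin_lin)

lemma TWp_ysub1: "TWp s (ysubp t p) q = TWp s p q"
proof -
  have "TWp s (ysubp t p) q = lin (\<lambda>a. TWp s (wd (map (ysub t) a)) q) p"
    by (simp add: ysubp_def TWp_lin1)
  also have "\<dots> = lin (\<lambda>a. TWp s (wd a) q) p"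
    by (simp add: TWp_wd1 rev_map tw_ysub1)
  also have "\<dots> = TWp s (lin wd p) q" by (simp add: TWp_lin1)
  finally show ?thesis by (simp add: lin_id)
qed

lemma ysubp_lin: "ysubp s (lin f p) = lin (\<lambda>w. ysubp s (f w)) p"
  by (simp add: ysubp_def lin_comp)

lemma TWp_ysub2: "ysubp s (TWp t p q) = TWp s p (ysubp s q)"
proof -
  have "ysubp s (TWp t p q) = lin (\<lambda>a. lin (\<lambda>b. ysubp s (tw t (rev a) (rev b))) q) p"
    by (simp add: TWp_def bilin_lin ysubp_lin)
  also have "\<dots> = lin (\<lambda>a. lin (\<lambda>b. tw s (rev a) (rev (map (ysub s) b))) q) p"
    by (simp add: tw_ysub2 rev_map)
  also have "\<dots> = TWp s p (ysubp s q)"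
    by (simp add: TWp_def bilin_lin ysubp_def lin_comp)
  finally show ?thesis .
qed

lemma assoc_step:
  fixes A B C :: ncpoly and \<alpha> \<beta> T :: complex
  defines "a \<equiv> rapp (Y \<alpha>) A" and "b \<equiv> rapp (Y \<beta>) B" and "c \<equiv> rapp (Y T) C"
  assumes i1: "TWp s (TWp 1 A b) c = TWp s A (TWp s b c)"
    and i2: "TWp s (TWp 1 a B) c = TWp s a (TWp s B c)"
    and i3: "TWp s (TWp 1 A B) c = TWp s A (TWp s B c)"
    and i4: "TWp s (TWp 1 a b) C = TWp s a (TWp s b C)"
    and i5: "TWp s (TWp 1 A b) C = TWp s A (TWp s b C)"
    and i6: "TWp s (TWp 1 a B) C = TWp s a (TWp s B C)"
    and i7: "TWp s (TWp 1 A B) C = TWp s A (TWp s B C)"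
  shows "TWp s (TWp 1 a b) c = TWp s a (TWp s b c)"
proof -
  define K where "K = TWp 1 A b + TWp 1 a B + rapp X (TWp 1 A B)"
  define L where "L = TWp s B c + TWp s b C + rapp X (TWp s B C)"
  have e1: "TWp 1 a b = rapp (Y \<beta>) K" unfolding K_def a_def b_def by simp
  have e2: "TWp s b c = rapp (Y T) L" unfolding L_def c_def b_def by simp
  have "TWp s (TWp 1 a b) c = rapp (Y T) (TWp s K c) + rapp (Y T) (TWp s (rapp (Y \<beta>) K) C)
      + rapp (Y T) (rapp X (TWp s K C))"
    unfolding e1 c_def by (rule TWp_YY)
  also have "TWp s K c = TWp s A (TWp s b c) + TWp s a (TWp s B c) + rapp X (TWp s A (TWp s B c))"
    unfolding K_def by (simp only: TWp_add1 TWp_X1 i1 i2 i3)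
  also have "TWp s (rapp (Y \<beta>) K) C = TWp s a (TWp s b C)"
    unfolding e1[symmetric] by (rule i4)
  also have "TWp s K C = TWp s A (TWp s b C) + TWp s a (TWp s B C) + rapp X (TWp s A (TWp s B C))"
    unfolding K_def by (simp only: TWp_add1 TWp_X1 i5 i6 i7)
  finally have lhs: "TWp s (TWp 1 a b) c = rapp (Y T) (TWp s A (TWp s b c) + TWp s a (TWp s B c) + rapp X (TWp s A (TWp s B c)))
      + rapp (Y T) (TWp s a (TWp s b C))
      + rapp (Y T) (rapp X (TWp s A (TWp s b C) + TWp s a (TWp s B C) + rapp X (TWp s A (TWp s B C))))" .
  have "TWp s a (TWp s b c) = rapp (Y T) (TWp s A (rapp (Y T) L)) + rapp (Y T) (TWp s a L)
      + rapp (Y T) (rapp X (TWp s A L))"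
    unfolding e2 a_def by (rule TWp_YY)
  also have "rapp (Y T) L = TWp s b c" by (simp only: e2)
  finally have rhs: "TWp s a (TWp s b c) = rapp (Y T) (TWp s A (TWp s b c))
      + rapp (Y T) (TWp s a (TWp s B c) + TWp s a (TWp s b C) + rapp X (TWp s a (TWp s B C)))
      + rapp (Y T) (rapp X (TWp s A (TWp s B c) + TWp s A (TWp s b C) + rapp X (TWp s A (TWp s B C))))"
    unfolding L_def by (simp only: TWp_add2 TWp_X2)
  show ?thesis unfolding lhs rhs by (simp only: rapp_add) (simp add: algebra_simps)
qed

lemma tw_assoc_wd: "TWp s (TWp 1 (wd a) (wd b)) (wd c) = TWp s (wd a) (TWp s (wd b) (wd c))"
proof (induction "length a + length b + length c" arbitrary: a b c rule: less_induct)
  case less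
  show ?case
  proof (cases "a = []")
    case True then show ?thesis by simp
  next
    case na: False
    show ?thesis
    proof (cases "b = []")
      case True then show ?thesis by (simp add: TWp_one2 TWp_ysub1)
    next
      case nb: False
      show ?thesis
      proof (cases "c = []")
        case True then show ?thesis by (simp add: TWp_one2 TWp_ysub2)
      next
        case nc: False
        obtain a' la where a: "a = a' @ [la]" using na by (cases a rule: rev_cases) auto
        obtain b' lb where b: "b = b' @ [lb]" using nb by (cases b rule: rev_cases) auto
        obtain c' lc where c: "c = c' @ [lc]" using nc by (cases c rule: rev_cases) auto
        show ?thesis
        proof (cases la)
          case X
          have ih: "TWp s (TWp 1 (wd a') (wd b)) (wd c) = TWp s (wd a') (TWp s (wd b) (wd c))"
            by (rule less) (simp add: a)
          show ?thesis unfolding a X wd_snoc by (simp only: TWp_X1 ih)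
        next
          case (Y \<alpha>)
          show ?thesis
          proof (cases lb)
            case X
            have ih: "TWp s (TWp 1 (wd a) (wd b')) (wd c) = TWp s (wd a) (TWp s (wd b') (wd c))"
              by (rule less) (simp add: b)
            show ?thesis unfolding b X wd_snoc by (simp only: TWp_X1 TWp_X2 ih)
          next
            case Yb: (Y \<beta>)
            show ?thesis
            proof (cases lc)
              case X
              have ih: "TWp s (TWp 1 (wd a) (wd b)) (wd c') = TWp s (wd a) (TWp s (wd b) (wd c'))"
                by (rule less) (simp add: c)
              show ?thesis unfolding c X wd_snoc by (simp only: TWp_X2 ih)
            next
              case Yc: (Y T)
            have i1: "TWp s (TWp 1 (wd a') (wd b)) (wd c) = TWp s (wd a') (TWp s (wd b) (wd c))"
              by (rule less) (simp add: a b c)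
            have i2: "TWp s (TWp 1 (wd a) (wd b')) (wd c) = TWp s (wd a) (TWp s (wd b') (wd c))"
              by (rule less) (simp add: a b c)
            have i3: "TWp s (TWp 1 (wd a') (wd b')) (wd c) = TWp s (wd a') (TWp s (wd b') (wd c))"
              by (rule less) (simp add: a b c)
            have i4: "TWp s (TWp 1 (wd a) (wd b)) (wd c') = TWp s (wd a) (TWp s (wd b) (wd c'))"
              by (rule less) (simp add: a b c)
            have i5: "TWp s (TWp 1 (wd a') (wd b)) (wd c') = TWp s (wd a') (TWp s (wd b) (wd c'))"
              by (rule less) (simp add: a b c)
            have i6: "TWp s (TWp 1 (wd a) (wd b')) (wd c') = TWp s (wd a) (TWp s (wd b') (wd c'))"
              by (rule less) (simp add: a b c)
            have i7: "TWp s (TWp 1 (wd a') (wd b')) (wd c') = TWp s (wd a') (TWp s (wd b') (wd c'))"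
              by (rule less) (simp add: a b c)
              note facts = i1 i2 i3 i4 i5 i6 i7
              show ?thesis
                using facts unfolding a b c Y Yb Yc wd_snoc
                by (rule assoc_step)
            qed
          qed
        qed
      qed
    qed
  qed
qed

lemma TWp_e1: "TWp s p q = lin (\<lambda>a. TWp s (wd a) q) p"
  using TWp_lin1[of s wd p q] by (simp add: lin_id)
lemma TWp_e2: "TWp s p q = lin (\<lambda>b. TWp s p (wd b)) q"
  using TWp_lin2[of s p wd q] by (simp add: lin_id)

lemma TWp_assoc: "TWp s (TWp 1 p q) r = TWp s p (TWp s q r)"
proof -
  have "TWp s (TWp 1 p q) r = TWp s (lin (\<lambda>a. lin (\<lambda>b. TWp 1 (wd a) (wd b)) q) p) r"
    by (subst TWp_e1, subst TWp_e2, rule refl)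
  also have "\<dots> = lin (\<lambda>a. lin (\<lambda>b. TWp s (TWp 1 (wd a) (wd b)) r) q) p"
    by (simp add: TWp_lin1)
  also have "\<dots> = lin (\<lambda>a. lin (\<lambda>b. lin (\<lambda>c. TWp s (TWp 1 (wd a) (wd b)) (wd c)) r) q) p"
    by (subst TWp_e2, rule refl)
  also have "\<dots> = lin (\<lambda>a. lin (\<lambda>b. lin (\<lambda>c. TWp s (wd a) (TWp s (wd b) (wd c))) r) q) p"
    by (simp add: tw_assoc_wd)
  also have "\<dots> = lin (\<lambda>a. TWp s (wd a) (lin (\<lambda>b. lin (\<lambda>c. TWp s (wd b) (wd c)) r) q)) p"
    by (simp add: TWp_lin2)
  also have "\<dots> = lin (\<lambda>a. TWp s (wd a) (TWp s q r)) p"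
    by (subst (2) TWp_e1, subst (2) TWp_e2, rule refl)
  also have "\<dots> = TWp s p (TWp s q r)"
    by (rule TWp_e1[symmetric])
  finally show ?thesis .
qed

definition A1w :: "word \<Rightarrow> bool" where
  "A1w w = (\<forall>t. Y t \<in> set w \<longrightarrow> t = 1)"

lemma A1w_simps[simp]: "A1w []" "A1w (X # w) = A1w w" "A1w (Y t # w) = (t = 1 \<and> A1w w)"
  "A1w (w @ w') = (A1w w \<and> A1w w')" "A1w (rev w) = A1w w"
  by (auto simp: A1w_def)

definition allA1 :: "ncpoly \<Rightarrow> bool" where
  "allA1 P = (\<forall>w\<in>Poly_Mapping.keys P. A1w w)"

lemma Alg1_eq: "Alg 1 = {P. allA1 P}"
  by (auto simp: Alg_def allA1_def A1w_def mu_def)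

lemma keys_wd: "Poly_Mapping.keys (wd w) \<subseteq> {w}" by (simp add: wd_def)

lemma allA1_wd: "A1w w \<Longrightarrow> allA1 (wd w)"
  using keys_wd by (auto simp: allA1_def)
lemma allA1_add: "allA1 P \<Longrightarrow> allA1 Q \<Longrightarrow> allA1 (P + Q)"
  using keys_add by (fastforce simp: allA1_def)
lemma allA1_uminus: "allA1 P \<Longrightarrow> allA1 (- P)"
  by (simp add: allA1_def)
lemma allA1_diff: "allA1 P \<Longrightarrow> allA1 Q \<Longrightarrow> allA1 (P - Q)"
  using keys_diff by (fastforce simp: allA1_def)
lemma allA1_zero: "allA1 0" by (simp add: allA1_def)
lemma allA1_lin: "(\<And>w. w \<in> Poly_Mapping.keys P \<Longrightarrow> allA1 (f w)) \<Longrightarrow> allA1 (lin f P)"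
  using keys_lin[of f P] by (fastforce simp: allA1_def)
lemma allA1_rapp: "allA1 P \<Longrightarrow> A1w [c] \<Longrightarrow> allA1 (rapp c P)"
  unfolding rapp_def by (rule allA1_lin) (auto simp: allA1_def intro!: allA1_wd dest: set_mp[OF keys_wd])

lemma allA1_phi_wd: "A1w w \<Longrightarrow> allA1 (phi (wd w))"
proof (induction w rule: rev_induct)
  case Nil then show ?case by (simp add: allA1_wd)
next
  case (snoc c w)
  then have h: "allA1 (phi (wd w))" by simp
  show ?case
  proof (cases c)
    case X then show ?thesis using h by (simp add: wd_snoc allA1_add allA1_rapp)
  next
    case (Y t) then show ?thesis using h snoc.prems by (simp add: wd_snoc allA1_diff allA1_rapp allA1_zero allA1_uminus)
  qed
qed

lemma phi_as_lin: "phi P = lin (\<lambda>a. phi (wd a)) P" by (simp add: phi_def)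

lemma allA1_phi: "allA1 P \<Longrightarrow> allA1 (phi P)"
  unfolding phi_as_lin[of P] by (rule allA1_lin) (rule allA1_phi_wd, simp add: allA1_def)

lemma allA1_tw: "A1w b \<Longrightarrow> allA1 (tw 1 a b)"
proof (induction "1::complex" a b rule: tw.induct)
  case (1 b) then show ?case by (simp add: allA1_wd)
next
  case (2 a as)
  have h: "A1w (map (ysub 1) w)" for w by (induction w) (auto, metis A1w_simps(2,3) ysub.elims)
  have "A1w (rev (map (ysub 1) (a # as)))" by (simp only: A1w_simps(5) h)
  then show ?case by (simp only: tw.simps allA1_wd)
next
  case (3 as b bs) then show ?case by (simp add: allA1_rapp)
next
  case (4 u as bs) then show ?case by (simp add: allA1_rapp)
next
  case (5 u as t bs) then show ?case by (simp add: allA1_rapp allA1_add)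
qed

lemma allA1_TWp: "allA1 Q \<Longrightarrow> allA1 (TWp 1 P Q)"
  unfolding TWp_e2[of 1 P Q]
proof (rule allA1_lin)
  fix b assume "allA1 Q" "b \<in> Poly_Mapping.keys Q"
  then have "A1w b" by (simp add: allA1_def)
  have "TWp 1 P (wd b) = lin (\<lambda>a. tw 1 (rev a) (rev b)) P" by (simp add: TWp_def bilin_lin)
  then show "allA1 (TWp 1 P (wd b))" using \<open>A1w b\<close> by (simp add: allA1_lin allA1_tw)
qed

lemma Iw_A1: "A1w w \<Longrightarrow> Iw acc w = map (ysub acc) w"
proof (induction w arbitrary: acc)
  case (Cons l w) then show ?case by (cases l) auto
qed simp

lemma IwMw_A1: "A1w w \<Longrightarrow> Iw 1 (Mw s w) = map (ysub s) w"
proof (induction w)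
  case (Cons l w) then show ?case by (cases l) (auto simp: Iw_A1)
qed simp

lemma cf_dwr: "A1w a \<Longrightarrow> phi (dwr s a b) = TWp s (phi (wd (rev a))) (phi (wd (rev b)))"
proof (induction s a b rule: dwr.induct)
  case (1 s w) then show ?case by simp
next
  case (2 s a v)
  let ?P = "phi (wd (rev (a # v)))"
  have k: "allA1 ?P" using 2 by (intro allA1_phi_wd) (cases a, simp_all)
  have "phi (dwr s (a # v) []) = lin (\<lambda>w. wd (Iw 1 (Mw s w))) ?P"
    by (simp add: psi_def)
  also have "\<dots> = ysubp s ?P"
    unfolding ysubp_def using k by (intro lin_cong) (simp add: allA1_def IwMw_A1)
  finally show ?case by (simp add: TWp_one2)
next
  case (3 s v w) show ?case using "3.prems" by (simp add: wd_snoc "3.IH" algebra_simps)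
next
  case (4 s v t w) show ?case using "4.prems" by (simp add: wd_snoc "4.IH" algebra_simps)
next
  case (5 s u v w) show ?case using "5.prems" by (simp add: wd_snoc "5.IH" algebra_simps)
next
  case (6 s u v t w) show ?case using "6.prems" by (simp add: wd_snoc "6.IH" algebra_simps)
qed

lemma dw_cf: "A1w a \<Longrightarrow> dw s a b = phi (TWp s (phi (wd a)) (phi (wd b)))"
proof -
  assume "A1w a"
  then have "phi (dw s a b) = TWp s (phi (wd a)) (phi (wd b))"
    unfolding dw_def using cf_dwr[of "rev a" s "rev b"] by simp
  then show ?thesis by (metis phi_phi)
qed

lemma diamond_cf: "allA1 P \<Longrightarrow> diamond s P Q = phi (TWp s (phi P) (phi Q))"
proof -
  assume P: "allA1 P"
  have "diamond s P Q = lin (\<lambda>a. lin (\<lambda>b. dw s a b) Q) P"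
    by (simp add: diamond_def bilin_lin)
  also have "\<dots> = lin (\<lambda>a. lin (\<lambda>b. phi (TWp s (phi (wd a)) (phi (wd b)))) Q) P"
    using P by (intro lin_cong) (simp add: allA1_def dw_cf)
  also have "\<dots> = phi (TWp s (phi P) (phi Q))"
    by (simp only: phi_as_lin[of P] phi_as_lin[of Q] TWp_lin1 TWp_lin2 phi_lin) (rule lin_swap)
  finally show ?thesis .
qed

theorem mainTheorem10:
  fixes r :: nat and s :: complex and u v w :: ncpoly
  assumes "r \<ge> 1" and "s \<in> mu r"
    and "u \<in> Alg 1" and "v \<in> Alg 1" and "w \<in> Alg r"
  shows "diamond s (diamond 1 u v) w = diamond s u (diamond s v w)"
proof -
  have u: "allA1 u" and v: "allA1 v" using assms(3,4) unfolding Alg1_eq by simp_all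
  have d1: "diamond 1 u v = phi (TWp 1 (phi u) (phi v))" using u by (rule diamond_cf)
  have a1: "allA1 (diamond 1 u v)" unfolding d1 by (intro allA1_phi allA1_TWp v)
  have "diamond s (diamond 1 u v) w = phi (TWp s (TWp 1 (phi u) (phi v)) (phi w))"
    using diamond_cf[OF a1] d1 by simp
  also have "\<dots> = phi (TWp s (phi u) (TWp s (phi v) (phi w)))" by (simp add: TWp_assoc)
  also have "\<dots> = diamond s u (diamond s v w)"
    using diamond_cf[OF u] diamond_cf[OF v] by simp
  finally show ?thesis .
qed

end
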